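(* Let $q$ be a prime power, let $n\ge 5$, let $a$ be the smallest prime divisor of $n$, let $d$ be an integer with $2\le d<n-(n/a)$, and let $\ell$ be a common prime divisor of $n$ and $d$. Then $$\binom{n/\ell}{d/\ell}_q\cdot\frac{|\mathrm{GL}(d/\ell,q^\ell)|}{|\mathrm{GL}(d,q)|}\cdot\frac{|\mathrm{GL}(n/\ell-d/\ell,q^\ell)|}{|\mathrm{GL}(n-d,q)|}\le q^{-(\ell-1)^2-3}.$$
   Context: $\binom{N}{K}_q=\prod_{i=0}^{K-1}\frac{q^{N-i}-1}{q^{K-i}-1}$ is the $q$-binomial coefficient, and $\mathrm{GL}(k,r)$ is the general linear group of $k\times k$ invertible matrices over $\mathbb{F}_r$. *)

theory Defs
  imports Complex_Main "HOL-Computational_Algebra.Primes"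
begin

definition qbinom :: "nat \<Rightarrow> nat \<Rightarrow> real \<Rightarrow> real" where
  "qbinom N K q = (\<Prod>i<K. (q ^ (N - i) - 1) / (q ^ (K - i) - 1))"

definition GL_order :: "nat \<Rightarrow> nat \<Rightarrow> real" where
  "GL_order k r = (\<Prod>i<k. (real r ^ k - real r ^ i))"

definition prime_power :: "nat \<Rightarrow> bool" where
  "prime_power q \<longleftrightarrow> (\<exists>p k. prime p \<and> k \<ge> 1 \<and> q = p ^ k)"

end

theory Submission
  imports Defs
begin

lemma P2: fixes D E :: int assumes "D \<ge> 1" "E \<ge> D+1" "E \<ge> 3"
  shows "D*E + D + 2*D*D + 2*E*E + 4 + 2*D + 2*E \<le> 4*D*D + 4*E*E"
proof -
  have "0 \<le> (D-E)*(D-E)" by simp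
  hence "2*(D*E) \<le> D*D+E*E" by (simp add: algebra_simps)
  moreover have "3*E \<le> E*E" using assms by simp
  moreover have "D \<le> D*D" using assms by simp
  ultimately show ?thesis using assms by linarith
qed

lemma P3: fixes D E l :: int assumes "D \<ge> 1" "E \<ge> 1" "D*D+E*E \<ge> 5" "l \<ge> 3"
  shows "D*E + D + l*D*D + l*E*E + ((l-1)^2 + 3) + l*D + l*E \<le> l*l*D*D + l*l*E*E"
proof -
  define s where "s = D*D+E*E"
  define t where "t = l*l - 2*l"
  have s5: "s \<ge> 5" using assms s_def by simp
  have "3*1 \<le> l*(l-2)" using assms by (intro mult_mono) auto
  hence t3: "t \<ge> 3" unfolding t_def by (simp add: algebra_simps)
  have "0 \<le> (D-E)*(D-E)" by simp
  hence h1: "2*(D*E) \<le> s" unfolding s_def by (simp add: algebra_simps)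
  have "D \<le> D*D" "E \<le> E*E" using assms by simp_all
  hence h2: "D + E \<le> s" and h5: "D \<le> s" unfolding s_def using assms by linarith+
  have h3: "l*(D+E) \<le> l*s" using h2 assms by simp
  have h4: "0 \<le> (2*t-3)*(s-5)" using s5 t3 by simp
  have "D*E + D + l*D*D + l*E*E + ((l-1)^2 + 3) + l*D + l*E =
        D*E + D + l*s + (l*l - 2*l + 4) + l*(D+E)" unfolding s_def by (simp add: algebra_simps power2_eq_square)
  also have "\<dots> \<le> l*l*s" using h1 h5 h3 h4 t3 unfolding t_def by (simp add: algebra_simps)
  also have "\<dots> = l*l*D*D + l*l*E*E" unfolding s_def by (simp add: algebra_simps)
  finally show ?thesis .
qed

lemma GL_upper: assumes "r \<ge> 1" shows "GL_order k r \<le> real r ^ (k*k)"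
proof -
  have "GL_order k r \<le> (\<Prod>i<k. real r ^ k)" unfolding GL_order_def
    using assms by (intro prod_mono) (auto intro: power_increasing)
  also have "\<dots> = real r ^ (k*k)" by (simp add: power_mult)
  finally show ?thesis .
qed
lemma GL_lower: assumes "r \<ge> 2" shows "real r ^ (k*k) \<le> GL_order k r * real r ^ k"
proof -
  have "(\<Prod>i<k. real r ^ (k-1)) \<le> GL_order k r" unfolding GL_order_def
  proof (intro prod_mono conjI)
    fix i assume "i \<in> {..<k}"
    hence ik: "i \<le> k - 1" "k = Suc (k-1)" by auto
    have "real r ^ i \<le> real r ^ (k-1)" using assms ik by (intro power_increasing) auto
    moreover have "real r ^ k = real r * real r ^ (k-1)" using ik by (metis power_Suc)
    moreover have "2 * real r ^ (k-1) \<le> real r * real r ^ (k-1)" using assms by (intro mult_right_mono) auto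
    ultimately show "real r ^ (k-1) \<le> real r ^ k - real r ^ i" by linarith
  qed simp
  hence "real r ^ ((k-1)*k) * real r ^ k \<le> GL_order k r * real r ^ k"
    using mult_right_mono[of _ _ "real r ^ k"] by (simp add: power_mult)
  moreover have "real r ^ ((k-1)*k) * real r ^ k = real r ^ (k*k)"
    by (cases k) (simp_all add: power_add[symmetric] algebra_simps)
  ultimately show ?thesis by simp
qed
lemma GL_pos: assumes "r \<ge> 2" shows "GL_order k r > 0"
  unfolding GL_order_def
proof (intro prod_pos)
  fix i assume "i \<in> {..<k}"
  hence "i < k" by simp
  moreover have "1 < real r" using assms by simp
  ultimately have "real r ^ i < real r ^ k" by (rule power_strict_increasing)
  thus "0 < real r ^ k - real r ^ i" by simp
qed
lemma qbinom_upper: assumes "x \<ge> 2" "D \<le> N"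
  shows "qbinom N D x \<le> x ^ ((N - D + 1) * D)"
proof -
  have "qbinom N D x \<le> (\<Prod>i<D. x ^ (N - D + 1))" unfolding qbinom_def
  proof (intro prod_mono conjI)
    fix i assume "i \<in> {..<D}"
    hence i: "i < D" by simp
    have p1: "x ^ (D - i) \<ge> x" using assms i power_increasing[of 1 "D-i" x] by simp
    have "x ^ (N - i) = x ^ (N - D) * x ^ (D - i)" using i assms by (simp add: power_add[symmetric])
    hence "x ^ (N - i) - 1 \<le> x ^ (N - D + 1) * (x ^ (D - i) - 1)"
    proof -
      assume eq: "x ^ (N - i) = x ^ (N - D) * x ^ (D - i)"
      have a: "x ^ (N - D) \<ge> 1" using assms by simp
      have "x ^ (N-D+1) * (x ^ (D - i) - 1) = x ^ (N - D) * (x * x ^ (D - i) - x)" by (simp add: algebra_simps)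
      moreover have "x * x ^ (D - i) - x \<ge> x ^ (D - i)"
      proof -
        have "(x-1)*(x ^ (D - i)-1) \<ge> 1*1" using p1 assms by (intro mult_mono) auto
        thus ?thesis by (simp add: algebra_simps)
      qed
      hence "x ^ (N - D) * x ^ (D - i) \<le> x ^ (N - D) * (x * x ^ (D - i) - x)"
        using a by (intro mult_left_mono) auto
      ultimately have "x ^ (N-D+1) * (x ^ (D - i) - 1) \<ge> x ^ (N - D) * x ^ (D - i)" 
        by linarith
      thus ?thesis using eq by linarith
    qed
    moreover have "x ^ (D - i) - 1 > 0" using p1 assms by linarith
    ultimately show "(x ^ (N - i) - 1) / (x ^ (D - i) - 1) \<le> x ^ (N - D + 1)"
      by (simp add: divide_le_eq)
    have "x ^ (N - i) \<ge> 1" using assms by simp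
    thus "0 \<le> (x ^ (N - i) - 1) / (x ^ (D - i) - 1)" using \<open>x ^ (D - i) - 1 > 0\<close> by simp
  qed
  also have "\<dots> = x ^ ((N - D + 1) * D)" by (simp add: power_mult del: Suc_eq_plus1 add_Suc_right add_Suc)
  finally show ?thesis .
qed

lemma exc: fixes x :: real assumes "x \<ge> 2"
  shows "x = real q \<Longrightarrow> qbinom 3 1 x * (GL_order 1 (q^2) / GL_order 2 q) * (GL_order 2 (q^2) / GL_order 4 q) \<le> 1 / x^4"
proof -
  assume xq: "x = real q"
  have x1: "x - 1 > 0" "x > 0" using assms by auto
  have a1: "qbinom 3 1 x = (x^3-1)/(x-1)" unfolding qbinom_def by simp
  have a2: "GL_order 1 (q^2) = x^2 - 1" unfolding GL_order_def xq by simp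
  have a3: "GL_order 2 q = (x^2-1)*(x^2-x)" unfolding GL_order_def xq by (simp add: numeral_eq_Suc lessThan_Suc)
  have a4: "GL_order 2 (q^2) = (x^4-1)*(x^4-x^2)" unfolding GL_order_def xq
    by (simp add: numeral_eq_Suc lessThan_Suc power_mult[symmetric] algebra_simps)
  have a5: "GL_order 4 q = (x^4-1)*(x^4-x)*(x^4-x^2)*(x^4-x^3)" unfolding GL_order_def xq
    by (simp add: numeral_eq_Suc lessThan_Suc algebra_simps)
  have f1: "x^2 - 1 = (x-1)*(x+1)" "x^2 - x = x*(x-1)" "x^4-1 = (x-1)*(x+1)*(x^2+1)"
     "x^4 - x = x*(x-1)*(x^2+x+1)" "x^4-x^2 = x^2*(x-1)*(x+1)" "x^4-x^3 = x^3*(x-1)" "x^3-1 = (x-1)*(x^2+x+1)"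
    by (simp_all add: algebra_simps power2_eq_square power3_eq_cube power4_eq_xxxx)
  have p: "x^2+x+1 > 0" "x + 1 > 0" "x^2+1>0" using x1 by (auto intro!: add_pos_pos)
  have e: "qbinom 3 1 x * (GL_order 1 (q^2) / GL_order 2 q) * (GL_order 2 (q^2) / GL_order 4 q) = 1 / (x^5 * (x-1)^3)"
  proof -
    have gen: "\<And>u v w z. u\<noteq>0 \<Longrightarrow> v\<noteq>0 \<Longrightarrow> w\<noteq>0 \<Longrightarrow> z\<noteq>0 \<Longrightarrow> x\<noteq>0 \<Longrightarrow>
      (u*z)/u * ((u*v)/((u*v)*(x*u))) * ((u*v*w)*(x^2*u*v) / ((u*v*w)*(x*u*z)*(x^2*u*v)*(x^3*u))) = 1/(x^5*u^3)"
      by (simp add: field_simps) algebra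
    show ?thesis unfolding a1 a2 a3 a4 a5 f1 using x1 p by (intro gen) auto
  qed
  have "x^4 * 1 \<le> x^5 * (x-1)^3" using assms
    by (intro mult_mono) (auto intro: power_increasing one_le_power)
  thus ?thesis unfolding e using assms by (simp add: divide_simps)
qed

theorem lemma5p3:
  fixes q n d a l :: nat
  assumes "prime_power q"
    and "n \<ge> 5"
    and "a = Min {p. prime p \<and> p dvd n}"
    and "2 \<le> d" and "real d < real n - real n / real a"
    and "prime l" and "l dvd n" and "l dvd d"
  shows "qbinom (n div l) (d div l) (real q) * (GL_order (d div l) (q ^ l) / GL_order d q)
           * (GL_order (n div l - d div l) (q ^ l) / GL_order (n - d) q)
         \<le> real q powr (- ((real l - 1) ^ 2) - 3)"
proof -
  obtain p k where pk: "prime p" "k \<ge> 1" "q = p ^ k" using assms(1) unfolding prime_power_def by blast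
  have "p \<ge> 2" using pk prime_ge_2_nat by blast
  hence "p ^ 1 \<le> p ^ k" using pk by (intro power_increasing) auto
  hence q2: "q \<ge> 2" using pk \<open>p \<ge> 2\<close> by simp
  define x where "x = real q"
  have x2: "x \<ge> 2" using q2 x_def by simp
  have l2: "l \<ge> 2" using assms(6) prime_ge_2_nat by blast
  define S where "S = {p. prime p \<and> p dvd n}"
  have finS: "finite S"
    by (rule finite_subset[of _ "{..n}"]) (use assms(2) in \<open>auto simp: S_def dest: dvd_imp_le\<close>)
  have lS: "l \<in> S" unfolding S_def using assms by simp
  have aS: "a \<in> S" unfolding assms(3) S_def[symmetric] using finS lS by (intro Min_in) auto
  have al: "a \<le> l" unfolding assms(3) S_def[symmetric] using finS lS by simp
  have a2: "a \<ge> 2" using aS unfolding S_def using prime_ge_2_nat by blast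
  obtain N where N: "n = l * N" using assms(7) by blast
  obtain D where D: "d = l * D" using assms(8) by blast
  have Ndef: "n div l = N" "d div l = D" using N D l2 by simp_all
  have "real n / real a > 0" using assms(2) a2 by simp
  hence "d < n" using assms(5) by linarith
  hence DN: "D < N" using N D by simp
  have D1: "D \<ge> 1" using D assms(4) by (cases D) auto
  define E where "E = N - D"
  have E1: "E \<ge> 1" using DN E_def by simp
  have NE: "N = D + E" using DN E_def by simp
  have nd: "n - d = l * E" using N D NE by (simp add: algebra_simps)
  define c where "c = (l - 1)^2 + 3"
  have rhs: "real q powr (- ((real l - 1) ^ 2) - 3) = 1 / x ^ c"
  proof -
    have e1: "real (l - 1) = real l - 1" using l2 by (simp add: of_nat_diff)
    have "real c = (real l - 1)^2 + 3" unfolding c_def of_nat_add of_nat_power e1 by simp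
    hence "- ((real l - 1) ^ 2) - 3 = - real c" by simp
    moreover have "x powr (- real c) = 1 / x ^ c" using x2
      by (simp add: powr_minus powr_realpow divide_inverse)
    ultimately show ?thesis unfolding x_def by simp
  qed
  have goal_eq: "qbinom (n div l) (d div l) (real q) * (GL_order (d div l) (q ^ l) / GL_order d q)
           * (GL_order (n div l - d div l) (q ^ l) / GL_order (n - d) q)
     = qbinom N D x * (GL_order D (q ^ l) / GL_order (l*D) q)
           * (GL_order E (q ^ l) / GL_order (l*E) q)"
    unfolding Ndef nd using D E_def x_def by simp
  show ?thesis
  proof (cases "l = 2 \<and> D = 1 \<and> E = 2")
    case True
    hence "N = 3" "l*D = 2" "l*E = 4" "c = 4" using NE unfolding c_def by auto
    moreover have "qbinom 3 1 x * (GL_order 1 (q^2) / GL_order 2 q) * (GL_order 2 (q^2) / GL_order 4 q) \<le> 1 / x^4"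
      using exc x2 x_def by blast
    ultimately show ?thesis unfolding goal_eq rhs using True by simp
  next
    case False
    have expo': "(E + 1) * D + l*(D*D) + l*(E*E) + c + l*D + l*E \<le> (l*D)*(l*D) + (l*E)*(l*E)"
    proof (cases "l = 2")
      case True
      have "a = 2" using al a2 True by simp
      hence "real d < real n - real n / 2" using assms(5) by simp
      hence "2*d < n" by linarith
      hence DE: "D < E" using N D NE True by simp
      have E3: "E \<ge> 3" using False True D1 DE by auto
      have c4: "c = 4" unfolding c_def True by simp
      have "int D * int E + int D + 2 * int D * int D + 2 * int E * int E + 4 + 2 * int D + 2 * int E
         \<le> 4 * int D * int D + 4 * int E * int E"
        using P2[of "int D" "int E"] D1 DE E3 by simp
      hence "int ((E + 1) * D + l*(D*D) + l*(E*E) + c + l*D + l*E) \<le> int ((l*D)*(l*D) + (l*E)*(l*E))"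
        unfolding True c4 by (simp add: algebra_simps)
      thus ?thesis by linarith
    next
      case False
      hence l3: "l \<ge> 3" using l2 by simp
      have not11: "\<not> (D = 1 \<and> E = 1)"
      proof
        assume DE: "D = 1 \<and> E = 1"
        hence nn: "n = 2 * l" "d = l" using N D NE by auto
        have "2 \<in> S" unfolding S_def nn by simp
        hence "a \<le> 2" unfolding assms(3) S_def[symmetric] using finS by simp
        hence "a = 2" using a2 by simp
        thus False using assms(5) nn by simp
      qed
      have s5: "int D * int D + int E * int E \<ge> 5"
      proof (cases "D \<ge> 2")
        case True
        have "int D * int D \<ge> 2 * 2" using True by (intro mult_mono) auto
        moreover have "int E * int E \<ge> 1 * 1" using E1 by (intro mult_mono) auto
        ultimately show ?thesis by linarith
      next
        case False
        hence "D = 1" using D1 by simp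
        hence "E \<ge> 2" using not11 E1 by auto
        hence "int E * int E \<ge> 2 * 2" by (intro mult_mono) auto
        thus ?thesis using \<open>D = 1\<close> by simp
      qed
      have ci: "int c = (int l - 1)^2 + 3" unfolding c_def using l2 by (simp add: of_nat_diff)
      have "int D * int E + int D + int l * int D * int D + int l * int E * int E + ((int l - 1)^2 + 3) + int l * int D + int l * int E
         \<le> int l * int l * int D * int D + int l * int l * int E * int E"
        using P3[of "int D" "int E" "int l"] D1 E1 s5 l3 by simp
      hence "int ((E + 1) * D + l*(D*D) + l*(E*E) + c + l*D + l*E) \<le> int ((l*D)*(l*D) + (l*E)*(l*E))"
        unfolding of_nat_add of_nat_mult ci by (simp add: algebra_simps)
      thus ?thesis by linarith
    qed
    have expo: "(N - D + 1) * D + l*(D*D) + l*(E*E) + c + l*D + l*E \<le> (l*D)*(l*D) + (l*E)*(l*E)"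
      using expo' E_def by simp
    have q2l: "q ^ l \<ge> 2" using q2 l2 by (metis le_trans power_increasing power_one_right less_imp_le one_le_numeral)
    have B: "qbinom N D x \<le> x ^ ((N - D + 1) * D)" using qbinom_upper x2 DN by simp
    have G1: "GL_order D (q^l) \<le> x ^ (l*(D*D))"
      using GL_upper[of "q^l" D] q2l by (simp add: x_def power_mult)
    have G2: "GL_order E (q^l) \<le> x ^ (l*(E*E))"
      using GL_upper[of "q^l" E] q2l by (simp add: x_def power_mult)
    have H1: "x ^ ((l*D)*(l*D)) \<le> GL_order (l*D) q * x ^ (l*D)"
      using GL_lower[of q "l*D"] q2 by (simp add: x_def)
    have H2: "x ^ ((l*E)*(l*E)) \<le> GL_order (l*E) q * x ^ (l*E)"
      using GL_lower[of q "l*E"] q2 by (simp add: x_def)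
    have pG1: "GL_order D (q^l) > 0" "GL_order E (q^l) > 0" using GL_pos q2l by auto
    have pH: "GL_order (l*D) q > 0" "GL_order (l*E) q > 0" using GL_pos q2 by auto
    define A where "A = qbinom N D x"
    define g1 where "g1 = GL_order D (q^l)"
    define g2 where "g2 = GL_order E (q^l)"
    define h1 where "h1 = GL_order (l*D) q"
    define h2 where "h2 = GL_order (l*E) q"
    define \<alpha> where "\<alpha> = (N - D + 1) * D"
    have xp: "\<And>m. x ^ m > 0" using x2 by simp
    have s1: "A * g1 * g2 * x^c \<le> x^\<alpha> * x^(l*(D*D)) * x^(l*(E*E)) * x^c"
      unfolding A_def g1_def g2_def \<alpha>_def using B G1 G2 pG1 xp
      by (intro mult_mono mult_nonneg_nonneg) (auto simp: less_imp_le)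
    have s2: "x^\<alpha> * x^(l*(D*D)) * x^(l*(E*E)) * x^c * (x^(l*D) * x^(l*E)) = 
              x^(\<alpha> + l*(D*D) + l*(E*E) + c + l*D + l*E)" by (simp add: power_add)
    have s3: "x^(\<alpha> + l*(D*D) + l*(E*E) + c + l*D + l*E) \<le> x^((l*D)*(l*D) + (l*E)*(l*E))"
      using expo x2 unfolding \<alpha>_def by (intro power_increasing) auto
    have s4: "x^((l*D)*(l*D) + (l*E)*(l*E)) \<le> (h1 * x^(l*D)) * (h2 * x^(l*E))"
      unfolding power_add h1_def h2_def using H1 H2 xp pH
      by (intro mult_mono) (auto simp: less_imp_le)
    have "(x^\<alpha> * x^(l*(D*D)) * x^(l*(E*E)) * x^c) * (x^(l*D) * x^(l*E)) \<le> (h1 * h2) * (x^(l*D) * x^(l*E))"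
      using s2 s3 s4 by (simp add: algebra_simps)
    hence s5: "x^\<alpha> * x^(l*(D*D)) * x^(l*(E*E)) * x^c \<le> h1 * h2"
      using xp by (metis mult_pos_pos mult_right_le_imp_le)
    have fin: "A * g1 * g2 * x^c \<le> h1 * h2" using s1 s5 by linarith
    have "A * (g1 / h1) * (g2 / h2) \<le> 1 / x^c"
      using fin pH xp[of c] unfolding h1_def[symmetric] h2_def[symmetric]
      by (simp add: divide_simps mult.commute mult.left_commute mult.assoc)
    thus ?thesis unfolding goal_eq rhs A_def g1_def g2_def h1_def h2_def .
  qed
qed
end
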